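(* Let $\delta,\varepsilon\in[0,1)$, let $\mathscr{H},\mathscr{K}$ be complex inner product spaces and let $T:\mathscr{H}\to\mathscr{K}$ be a linear $(\delta,\varepsilon)$-orthogonality preserving mapping. If $\eta,\zeta\in\mathscr{H}\setminus\{0\}$ are orthogonal, then $$\sqrt{\frac{(1-\delta)(1-\varepsilon)}{(1+\delta)(1+\varepsilon)}}\,\|T\zeta\|\,\|\eta\|\leq\|T\eta\|\,\|\zeta\|\leq\sqrt{\frac{(1-\delta)(1+\varepsilon)}{(1+\delta)(1-\varepsilon)}}\,\|T\zeta\|\,\|\eta\|.$$
   Context: A mapping $T:\mathscr{H}\to\mathscr{K}$ between inner product spaces is $(\delta,\varepsilon)$-orthogonality preserving if for all $\eta,\zeta\in\mathscr{H}$, $|(\eta,\zeta)|\leq\delta\|\eta\|\,\|\zeta\|$ implies $|(T\eta,T\zeta)|\leq\varepsilon\|T\eta\|\,\|T\zeta\|$. *)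

theory Defs
  imports Complex_Main
begin

class complex_inner_space = ab_group_add +
  fixes cscale :: "complex \<Rightarrow> 'a \<Rightarrow> 'a" (infixr \<open>*\<^sub>C\<close> 75)
    and cinner :: "'a \<Rightarrow> 'a \<Rightarrow> complex"
  assumes cis_scale_add_right: "a *\<^sub>C (x + y) = a *\<^sub>C x + a *\<^sub>C y"
    and cis_scale_add_left: "(a + b) *\<^sub>C x = a *\<^sub>C x + b *\<^sub>C x"
    and cis_scale_scale: "a *\<^sub>C (b *\<^sub>C x) = (a * b) *\<^sub>C x"
    and cis_scale_one: "1 *\<^sub>C x = x"
    and cis_inner_add_left: "cinner (x + y) z = cinner x z + cinner y z"
    and cis_inner_scale_left: "cinner (a *\<^sub>C x) y = a * cinner x y"
    and cis_inner_commute: "cinner y x = cnj (cinner x y)"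
    and cis_inner_nonneg: "0 \<le> Re (cinner x x)"
    and cis_inner_zero_iff: "cinner x x = 0 \<longleftrightarrow> x = 0"

definition cnorm :: "'a::complex_inner_space \<Rightarrow> real" where
  "cnorm x = sqrt (Re (cinner x x))"

definition clinear :: "('a::complex_inner_space \<Rightarrow> 'b::complex_inner_space) \<Rightarrow> bool" where
  "clinear T \<longleftrightarrow> (\<forall>x y. T (x + y) = T x + T y) \<and> (\<forall>a x. T (a *\<^sub>C x) = a *\<^sub>C T x)"

definition orth_preserving ::
  "real \<Rightarrow> real \<Rightarrow> ('a::complex_inner_space \<Rightarrow> 'b::complex_inner_space) \<Rightarrow> bool" where
  "orth_preserving \<delta> \<epsilon> T \<longleftrightarrow>
     (\<forall>\<eta> \<zeta>. cmod (cinner \<eta> \<zeta>) \<le> \<delta> * cnorm \<eta> * cnorm \<zeta> \<longrightarrow>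
        cmod (cinner (T \<eta>) (T \<zeta>)) \<le> \<epsilon> * cnorm (T \<eta>) * cnorm (T \<zeta>))"

end

theory Submission
  imports Defs
begin

lemma cscale_zero: "(0::complex) *\<^sub>C (x::'a::complex_inner_space) = 0"
proof -
  have "(0 + 0) *\<^sub>C x = 0 *\<^sub>C x + 0 *\<^sub>C x" by (rule cis_scale_add_left)
  then show ?thesis by simp
qed

lemma cinner_zero_left: "cinner (0::'a::complex_inner_space) y = 0"
proof -
  have "cinner (0 + 0) y = cinner (0::'a) y + cinner 0 y" by (rule cis_inner_add_left)
  then show ?thesis by simp
qed

lemma cinner_add_right: "cinner (x::'a::complex_inner_space) (y + z) = cinner x y + cinner x z"
proof -
  have "cinner x (y + z) = cnj (cinner (y + z) x)" by (rule cis_inner_commute)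
  also have "\<dots> = cnj (cinner y x) + cnj (cinner z x)" by (simp add: cis_inner_add_left)
  also have "\<dots> = cinner x y + cinner x z" by (simp add: cis_inner_commute[of x y] cis_inner_commute[of x z])
  finally show ?thesis .
qed

lemma cinner_scale_right: "cinner (x::'a::complex_inner_space) (a *\<^sub>C y) = cnj a * cinner x y"
proof -
  have "cinner x (a *\<^sub>C y) = cnj (cinner (a *\<^sub>C y) x)" by (rule cis_inner_commute)
  also have "\<dots> = cnj a * cnj (cinner y x)" by (simp add: cis_inner_scale_left)
  also have "\<dots> = cnj a * cinner x y" by (simp add: cis_inner_commute[of x y])
  finally show ?thesis .
qed

lemma cinner_self: "cinner (x::'a::complex_inner_space) x = complex_of_real (cnorm x ^ 2)"
proof -
  have "cinner x x = cnj (cinner x x)" by (rule cis_inner_commute)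
  then have "Im (cinner x x) = Im (cnj (cinner x x))" by (rule arg_cong)
  then have "Im (cinner x x) = 0" by simp
  moreover have "cnorm x ^ 2 = Re (cinner x x)" unfolding cnorm_def using cis_inner_nonneg by simp
  ultimately show ?thesis by (simp add: complex_eq_iff)
qed

lemma expand:
  "cinner (a *\<^sub>C e + b *\<^sub>C f) (c *\<^sub>C e + d *\<^sub>C (f::'a::complex_inner_space)) =
   a * cnj c * cinner e e + a * cnj d * cinner e f + b * cnj c * cinner f e + b * cnj d * cinner f f"
  by (simp add: cis_inner_add_left cinner_add_right cis_inner_scale_left cinner_scale_right algebra_simps)

lemma cnorm_nonneg: "0 \<le> cnorm x"
  unfolding cnorm_def using cis_inner_nonneg by simp

lemma key:
  fixes T :: "'a::complex_inner_space \<Rightarrow> 'b::complex_inner_space"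
  assumes "0 \<le> \<delta>" "\<delta> < 1" "0 \<le> \<epsilon>" "\<epsilon> < 1"
    and "clinear T" and "orth_preserving \<delta> \<epsilon> T"
    and "cinner \<eta> \<zeta> = 0"
  shows "(1 - \<epsilon>) * (1 + \<delta>) * (cnorm (T \<eta>) * cnorm \<zeta>)^2
         \<le> (1 + \<epsilon>) * (1 - \<delta>) * (cnorm (T \<zeta>) * cnorm \<eta>)^2"
proof -
  define p where "p = sqrt ((1 - \<delta>) / (1 + \<delta>))"
  have p2: "p^2 = (1 - \<delta>) / (1 + \<delta>)" unfolding p_def using assms by simp
  have p2': "(1 + \<delta>) * p^2 = 1 - \<delta>" using p2 assms by simp
  define s where "s = cnorm \<zeta>"
  define q where "q = p * cnorm \<eta>"
  define x where "x = complex_of_real s *\<^sub>C \<eta> + complex_of_real q *\<^sub>C \<zeta>"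
  define y where "y = complex_of_real s *\<^sub>C \<eta> + complex_of_real (-q) *\<^sub>C \<zeta>"
  have ze: "cinner \<zeta> \<eta> = 0" using assms(7) cis_inner_commute by (metis complex_cnj_zero)
  define N where "N = s * cnorm \<eta>"
  have xy: "cinner x y = complex_of_real (N^2 * (1 - p^2))"
    unfolding x_def y_def expand using assms(7) ze
    by (simp add: cinner_self N_def q_def s_def power_mult_distrib of_real_mult[symmetric] of_real_power[symmetric] of_real_add[symmetric] of_real_diff[symmetric] del: of_real_mult of_real_power of_real_add of_real_diff) (simp add: power2_eq_square algebra_simps)
  have xx: "cinner x x = complex_of_real (N^2 * (1 + p^2))"
    unfolding x_def expand using assms(7) ze
    by (simp add: cinner_self N_def q_def s_def power_mult_distrib of_real_mult[symmetric] of_real_power[symmetric] of_real_add[symmetric] of_real_diff[symmetric] del: of_real_mult of_real_power of_real_add of_real_diff) (simp add: power2_eq_square algebra_simps)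
  have yy: "cinner y y = complex_of_real (N^2 * (1 + p^2))"
    unfolding y_def expand using assms(7) ze
    by (simp add: cinner_self N_def q_def s_def power_mult_distrib of_real_mult[symmetric] of_real_power[symmetric] of_real_add[symmetric] of_real_diff[symmetric] del: of_real_mult of_real_power of_real_add of_real_diff) (simp add: power2_eq_square algebra_simps)
  have nx: "cnorm x = sqrt (N^2 * (1 + p^2))" unfolding cnorm_def xx by simp
  have ny: "cnorm y = sqrt (N^2 * (1 + p^2))" unfolding cnorm_def yy by simp
  have nxy: "cnorm x * cnorm y = N^2 * (1 + p^2)" unfolding nx ny real_sqrt_mult_self by simp
  have p1: "p^2 \<le> 1" using p2 assms by simp
  have "N^2 * (1 - p^2) \<le> \<delta> * (N^2 * (1 + p^2))"
  proof -
    have "1 - p^2 \<le> \<delta> * (1 + p^2)" using p2' assms by (simp add: algebra_simps)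
    from mult_right_mono[OF this, of "N^2"] show ?thesis by (simp add: algebra_simps)
  qed
  moreover have "cmod (cinner x y) = N^2 * (1 - p^2)"
    unfolding xy norm_of_real using p1 by simp
  ultimately have hyp: "cmod (cinner x y) \<le> \<delta> * cnorm x * cnorm y"
    using nxy by (simp add: mult.assoc)
  have lin1: "\<And>u v. T (u + v) = T u + T v" and lin2: "\<And>a u. T (a *\<^sub>C u) = a *\<^sub>C T u"
    using assms(5) unfolding clinear_def by auto
  have Tx: "T x = complex_of_real s *\<^sub>C T \<eta> + complex_of_real q *\<^sub>C T \<zeta>"
    unfolding x_def lin1 lin2 ..
  have Ty: "T y = complex_of_real s *\<^sub>C T \<eta> + complex_of_real (-q) *\<^sub>C T \<zeta>"
    unfolding y_def lin1 lin2 ..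
  have concl: "cmod (cinner (T x) (T y)) \<le> \<epsilon> * cnorm (T x) * cnorm (T y)"
    using assms(6) hyp unfolding orth_preserving_def by blast
  define a where "a = cnorm (T \<eta>)"
  define b where "b = cnorm (T \<zeta>)"
  define c where "c = cinner (T \<eta>) (T \<zeta>)"
  have c': "cinner (T \<zeta>) (T \<eta>) = cnj c" unfolding c_def by (rule cis_inner_commute)
  have ReTxy: "Re (cinner (T x) (T y)) = s^2 * a^2 - q^2 * b^2"
    unfolding Tx Ty expand c' using c_def
    by (simp add: cinner_self a_def b_def power2_eq_square algebra_simps)
  have Txx: "cnorm (T x) ^ 2 = s^2 * a^2 + q^2 * b^2 + 2 * s * q * Re c"
    unfolding cnorm_def using cis_inner_nonneg[of "T x"]
    unfolding Tx expand c' using c_def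
    by (simp add: cinner_self a_def b_def power2_eq_square algebra_simps)
  have Tyy: "cnorm (T y) ^ 2 = s^2 * a^2 + q^2 * b^2 - 2 * s * q * Re c"
    unfolding cnorm_def using cis_inner_nonneg[of "T y"]
    unfolding Ty expand c' using c_def
    by (simp add: cinner_self a_def b_def power2_eq_square algebra_simps)
  have amgm: "cnorm (T x) * cnorm (T y) \<le> s^2 * a^2 + q^2 * b^2"
  proof -
    have "0 \<le> (cnorm (T x) - cnorm (T y))^2" by simp
    then have "2 * (cnorm (T x) * cnorm (T y)) \<le> cnorm (T x) ^ 2 + cnorm (T y) ^ 2"
      by (simp add: power2_diff)
    then show ?thesis using Txx Tyy by linarith
  qed
  have "s^2 * a^2 - q^2 * b^2 \<le> \<epsilon> * (s^2 * a^2 + q^2 * b^2)"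
  proof -
    have "Re (cinner (T x) (T y)) \<le> cmod (cinner (T x) (T y))" by (rule complex_Re_le_cmod)
    also have "\<dots> \<le> \<epsilon> * (cnorm (T x) * cnorm (T y))" using concl by (simp add: mult.assoc)
    also have "\<dots> \<le> \<epsilon> * (s^2 * a^2 + q^2 * b^2)" using amgm assms(3) by (rule mult_left_mono)
    finally show ?thesis using ReTxy by simp
  qed
  then have "(1 - \<epsilon>) * (s^2 * a^2) \<le> (1 + \<epsilon>) * (q^2 * b^2)" by (simp add: algebra_simps)
  then have "(1 + \<delta>) * ((1 - \<epsilon>) * (s^2 * a^2)) \<le> (1 + \<delta>) * ((1 + \<epsilon>) * (q^2 * b^2))"
    using assms by (intro mult_left_mono) auto
  also have "(1 + \<delta>) * ((1 + \<epsilon>) * (q^2 * b^2)) = (1 + \<epsilon>) * ((1 + \<delta>) * p^2) * (cnorm \<eta>)^2 * b^2"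
    unfolding q_def by (simp add: power_mult_distrib algebra_simps)
  finally have "(1 + \<delta>) * ((1 - \<epsilon>) * (s^2 * a^2)) \<le> (1 + \<epsilon>) * (1 - \<delta>) * (cnorm \<eta>)^2 * b^2"
    unfolding p2' .
  then show ?thesis unfolding a_def b_def s_def power_mult_distrib by (simp only: mult_ac)
qed

theorem corollary3p2:
  fixes T :: "'a::complex_inner_space \<Rightarrow> 'b::complex_inner_space"
    and \<delta> \<epsilon> :: real and \<eta> \<zeta> :: 'a
  assumes "0 \<le> \<delta>" "\<delta> < 1" "0 \<le> \<epsilon>" "\<epsilon> < 1"
    and "clinear T" and "orth_preserving \<delta> \<epsilon> T"
    and "\<eta> \<noteq> 0" and "\<zeta> \<noteq> 0" and "cinner \<eta> \<zeta> = 0"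
  shows "sqrt (((1 - \<delta>) * (1 - \<epsilon>)) / ((1 + \<delta>) * (1 + \<epsilon>))) * cnorm (T \<zeta>) * cnorm \<eta>
           \<le> cnorm (T \<eta>) * cnorm \<zeta>
       \<and> cnorm (T \<eta>) * cnorm \<zeta>
           \<le> sqrt (((1 - \<delta>) * (1 + \<epsilon>)) / ((1 + \<delta>) * (1 - \<epsilon>))) * cnorm (T \<zeta>) * cnorm \<eta>"
proof -
  define X where "X = cnorm (T \<eta>) * cnorm \<zeta>"
  define Y where "Y = cnorm (T \<zeta>) * cnorm \<eta>"
  have X0: "0 \<le> X" and Y0: "0 \<le> Y" unfolding X_def Y_def by (simp_all add: cnorm_nonneg)
  have ze: "cinner \<zeta> \<eta> = 0" using assms(9) cis_inner_commute by (metis complex_cnj_zero)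
  have k1: "(1 - \<epsilon>) * (1 + \<delta>) * X^2 \<le> (1 + \<epsilon>) * (1 - \<delta>) * Y^2"
    unfolding X_def Y_def using key[OF assms(1-6) assms(9)] .
  have k2: "(1 - \<epsilon>) * (1 + \<delta>) * Y^2 \<le> (1 + \<epsilon>) * (1 - \<delta>) * X^2"
    unfolding X_def Y_def using key[OF assms(1-6) ze] .
  define r where "r = ((1 - \<delta>) * (1 + \<epsilon>)) / ((1 + \<delta>) * (1 - \<epsilon>))"
  define L where "L = ((1 - \<delta>) * (1 - \<epsilon>)) / ((1 + \<delta>) * (1 + \<epsilon>))"
  have pos: "0 < (1 + \<delta>) * (1 - \<epsilon>)" "0 < (1 + \<delta>) * (1 + \<epsilon>)" "0 < (1 - \<delta>) * (1 + \<epsilon>)"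
    using assms by auto
  have r0: "0 \<le> r" unfolding r_def using assms by auto
  have L0: "0 \<le> L" unfolding L_def using assms by auto
  have up2: "X^2 \<le> r * Y^2"
    unfolding r_def using k1 pos(1) by (simp add: field_simps)
  have up: "X \<le> sqrt r * Y"
  proof -
    have "X = sqrt (X^2)" using X0 by simp
    also have "\<dots> \<le> sqrt (r * Y^2)" using up2 by (rule real_sqrt_le_mono)
    also have "\<dots> = sqrt r * Y" using Y0 by (simp add: real_sqrt_mult)
    finally show ?thesis .
  qed
  have Y2: "Y^2 \<le> ((1 + \<epsilon>) * (1 - \<delta>)) / ((1 - \<epsilon>) * (1 + \<delta>)) * X^2"
    using k2 pos(1) by (simp add: field_simps)
  have eqL: "L * (((1 + \<epsilon>) * (1 - \<delta>)) / ((1 - \<epsilon>) * (1 + \<delta>))) = ((1 - \<delta>) / (1 + \<delta>))^2"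
  proof -
    have nz: "1 + \<delta> \<noteq> 0" "1 - \<epsilon> \<noteq> 0" "1 + \<epsilon> \<noteq> 0" using assms by auto
    show ?thesis unfolding L_def using nz by (simp add: power2_eq_square)
  qed
  have lo2: "L * Y^2 \<le> X^2"
  proof -
    have "L * Y^2 \<le> L * (((1 + \<epsilon>) * (1 - \<delta>)) / ((1 - \<epsilon>) * (1 + \<delta>)) * X^2)"
      using Y2 L0 by (rule mult_left_mono)
    also have "\<dots> = ((1 - \<delta>) / (1 + \<delta>))^2 * X^2"
      using eqL by (simp only: mult.assoc[symmetric])
    also have "\<dots> \<le> 1 * X^2"
    proof (rule mult_right_mono)
      have "0 \<le> (1 - \<delta>) / (1 + \<delta>)" "(1 - \<delta>) / (1 + \<delta>) \<le> 1" using assms by auto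
      then show "((1 - \<delta>) / (1 + \<delta>))^2 \<le> 1" by (simp add: power_le_one)
    qed simp
    finally show ?thesis by simp
  qed
  have lo: "sqrt L * Y \<le> X"
  proof -
    have "sqrt L * Y = sqrt (L * Y^2)" using Y0 by (simp add: real_sqrt_mult)
    also have "\<dots> \<le> sqrt (X^2)" using lo2 by (rule real_sqrt_le_mono)
    also have "\<dots> = X" using X0 by simp
    finally show ?thesis .
  qed
  have e1: "sqrt L * Y = sqrt L * cnorm (T \<zeta>) * cnorm \<eta>" unfolding Y_def by (simp only: mult.assoc)
  have e2: "sqrt r * Y = sqrt r * cnorm (T \<zeta>) * cnorm \<eta>" unfolding Y_def by (simp only: mult.assoc)
  show ?thesis using up[unfolded e2] lo[unfolded e1] unfolding X_def r_def L_def by (intro conjI)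
qed

end
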